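(* For any convex body $K\subset\mathbb{R}^n$ symmetric with respect to the origin and any sequence of positive reals $R_0<R_1<\cdots<R_s$, \[ N(D,R_0K^{\circ})\le N(D,R_sK^{\circ})\prod_{j=0}^{s-1}N\Big(D,\frac{R_j}{2}\,(K\cap R_{j+1}D)^{\circ}\Big) \] and \[ N(K,R_0D)\le N(K,R_sD)\prod_{j=0}^{s-1}N(2K\cap R_{j+1}D,\,R_jD). \]
   Context: For sets $A,B\subset\mathbb{R}^n$, the covering number $N(A,B)$ is the minimal number $N$ of points $x_1,\dots,x_N\in\mathbb{R}^n$ such that $A\subset\bigcup_{i\le N}(x_i+B)$. $D$ denotes the Euclidean unit ball of $\mathbb{R}^n$, and for a set $A$, $A^{\circ}=\{u\in\mathbb{R}^n:\sup_{x\in A}\langle x,u\rangle\le 1\}$ is its polar. *)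

theory Defs
  imports "HOL-Analysis.Analysis" "HOL-Library.Extended_Nat"
begin

definition covering_number :: "'a::real_vector set \<Rightarrow> 'a set \<Rightarrow> enat" where
  "covering_number A B =
     (INF X \<in> {X. finite X \<and> A \<subseteq> (\<Union>x\<in>X. (\<lambda>y. x + y) ` B)}. enat (card X))"

definition polar :: "'a::real_inner set \<Rightarrow> 'a set" where
  "polar A = {u. \<forall>x\<in>A. inner x u \<le> 1}"

definition sdilate :: "real \<Rightarrow> 'a::real_vector set \<Rightarrow> 'a set" where
  "sdilate r A = (\<lambda>x. r *\<^sub>R x) ` A"

definition convex_body :: "'a::euclidean_space set \<Rightarrow> bool" where
  "convex_body K \<longleftrightarrow> compact K \<and> convex K \<and> interior K \<noteq> {}"

definition origin_symmetric :: "'a::real_vector set \<Rightarrow> bool" where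
  "origin_symmetric K \<longleftrightarrow> (\<forall>x\<in>K. - x \<in> K)"

end

theory Submission
  imports Defs
begin

lemma enat_INF_attained:
  fixes g :: "'b \<Rightarrow> enat"
  assumes "S \<noteq> {}"
  shows "\<exists>X\<in>S. (INF x\<in>S. g x) = g X"
proof -
  obtain x0 where "x0 \<in> S" using assms by blast
  define n where "n = (LEAST n. n \<in> g ` S)"
  have "n \<in> g ` S" unfolding n_def by (rule LeastI[of _ "g x0"]) (use \<open>x0 \<in> S\<close> in blast)
  then obtain X where X: "X \<in> S" "g X = n" by blast
  have "\<forall>x\<in>S. n \<le> g x" unfolding n_def by (auto intro: Least_le)
  then have "(INF x\<in>S. g x) = g X" using X by (metis INF_greatest INF_lower antisym)
  then show ?thesis using X by blast
qed

lemma covering_number_ge1: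
  assumes "A \<noteq> {}"
  shows "1 \<le> covering_number A B"
  unfolding covering_number_def
proof (rule INF_greatest)
  fix X assume "X \<in> {X. finite X \<and> A \<subseteq> (\<Union>x\<in>X. (\<lambda>y. x + y) ` B)}"
  then have "finite X" "X \<noteq> {}" using assms by auto
  then show "1 \<le> enat (card X)" by (simp add: one_enat_def Suc_leI card_gt_0_iff)
qed

lemma covering_number_le_card:
  assumes "finite X" "A \<subseteq> (\<Union>x\<in>X. (\<lambda>y. x + y) ` B)"
  shows "covering_number A B \<le> enat (card X)"
  unfolding covering_number_def by (rule INF_lower) (use assms in blast)

lemma covering_mult:
  fixes f :: "'a \<Rightarrow> 'a \<Rightarrow> 'a::real_vector"
  assumes A1ne: "A1 \<noteq> {}" and A2ne: "A2 \<noteq> {}"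
  and H: "\<And>X Y. finite X \<Longrightarrow> A1 \<subseteq> (\<Union>x\<in>X. (\<lambda>y. x + y) ` B1) \<Longrightarrow> finite Y \<Longrightarrow>
            A2 \<subseteq> (\<Union>y\<in>Y. (\<lambda>z. y + z) ` B2) \<Longrightarrow>
            A \<subseteq> (\<Union>z\<in>(\<lambda>(x,y). f x y) ` (X \<times> Y). (\<lambda>w. z + w) ` B)"
  shows "covering_number A B \<le> covering_number A1 B1 * covering_number A2 B2"
proof -
  define S1 where "S1 = {X. finite X \<and> A1 \<subseteq> (\<Union>x\<in>X. (\<lambda>y. x + y) ` B1)}"
  define S2 where "S2 = {X. finite X \<and> A2 \<subseteq> (\<Union>x\<in>X. (\<lambda>y. x + y) ` B2)}"
  have c1: "covering_number A1 B1 = (INF X\<in>S1. enat (card X))" unfolding S1_def covering_number_def ..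
  have c2: "covering_number A2 B2 = (INF X\<in>S2. enat (card X))" unfolding S2_def covering_number_def ..
  have g1: "1 \<le> covering_number A1 B1" by (rule covering_number_ge1[OF A1ne])
  have g2: "1 \<le> covering_number A2 B2" by (rule covering_number_ge1[OF A2ne])
  show ?thesis
  proof (cases "S1 = {} \<or> S2 = {}")
    case True
    then have "covering_number A1 B1 = \<infinity> \<or> covering_number A2 B2 = \<infinity>"
      using c1 c2 by (auto simp: top_enat_def)
    then have "covering_number A1 B1 * covering_number A2 B2 = \<infinity>"
      using g1 g2 by (auto simp: imult_is_infinity)
    then show ?thesis by simp
  next
    case False
    then obtain X where X: "X \<in> S1" "covering_number A1 B1 = enat (card X)"
      using enat_INF_attained[of S1 "\<lambda>X. enat (card X)"] c1 by auto
    obtain Y where Y: "Y \<in> S2" "covering_number A2 B2 = enat (card Y)"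
      using enat_INF_attained[of S2 "\<lambda>X. enat (card X)"] c2 False by auto
    define Z where "Z = (\<lambda>(x,y). f x y) ` (X \<times> Y)"
    have fin: "finite X" "finite Y" using X Y unfolding S1_def S2_def by auto
    have "finite Z" unfolding Z_def using fin by auto
    moreover have "A \<subseteq> (\<Union>z\<in>Z. (\<lambda>w. z + w) ` B)"
      unfolding Z_def using H[of X Y] X Y unfolding S1_def S2_def by auto
    ultimately have "covering_number A B \<le> enat (card Z)" by (rule covering_number_le_card)
    also have "card Z \<le> card X * card Y"
      unfolding Z_def by (metis card_cartesian_product card_image_le fin finite_cartesian_product)
    then have "enat (card Z) \<le> enat (card X) * enat (card Y)" by simp
    finally show ?thesis using X Y by simp
  qed
qed

lemma sdilate_cball: "0 < r \<Longrightarrow> sdilate r (cball 0 1) = cball (0::'a::real_normed_vector) r"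
  unfolding sdilate_def
proof (intro equalityI subsetI)
  fix x assume "0 < r" "x \<in> (\<lambda>x. r *\<^sub>R x) ` cball (0::'a) 1"
  then show "x \<in> cball 0 r" by auto
next
  fix x :: 'a assume r: "0 < r" and x: "x \<in> cball 0 r"
  have "(1/r) *\<^sub>R x \<in> cball 0 1" using r x by (simp add: field_simps)
  moreover have "x = r *\<^sub>R ((1/r) *\<^sub>R x)" using r by simp
  ultimately show "x \<in> (\<lambda>x. r *\<^sub>R x) ` cball 0 1" by blast
qed

lemma mem_sdilate: "x \<in> sdilate r A \<longleftrightarrow> (\<exists>a\<in>A. x = r *\<^sub>R a)"
  unfolding sdilate_def by auto

lemma mem_shift_sdilate: "a \<in> A \<Longrightarrow> z + r *\<^sub>R a \<in> (+) z ` sdilate r A"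
  unfolding sdilate_def by (intro imageI)

lemma polar_convex: "convex (polar A)"
  unfolding polar_def convex_def by (auto simp: inner_add_right intro!: convex_bound_le)

lemma polar_closed: "closed (polar (A::'a::real_inner set))"
proof -
  have "polar A = (\<Inter>x\<in>A. {u. inner x u \<le> 1})" unfolding polar_def by auto
  moreover have "closed {u. inner x u \<le> (1::real)}" for x :: 'a
    by (intro closed_Collect_le continuous_intros)
  ultimately show ?thesis by auto
qed

lemma zero_in_polar: "0 \<in> polar A"
  unfolding polar_def by simp

lemma polar_bounded:
  assumes e: "0 < e" and sub: "ball 0 e \<subseteq> (K::'a::real_inner set)"
  shows "polar K \<subseteq> cball 0 (2/e)"
proof
  fix u assume u: "u \<in> polar K"
  show "u \<in> cball 0 (2/e)"
  proof (cases "u = 0")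
    case True then show ?thesis using e by simp
  next
    case False
    define k where "k = ((e/2)/norm u) *\<^sub>R u"
    have "norm k = e/2" using False e unfolding k_def by simp
    then have "k \<in> K" using sub e by auto
    then have "inner k u \<le> 1" using u unfolding polar_def by auto
    moreover have "inner k u = (e/2) * norm u"
      using False unfolding k_def by (simp add: power2_norm_eq_inner[symmetric] power2_eq_square)
    ultimately have "norm u \<le> 2/e" using e by (simp add: field_simps)
    then show ?thesis by simp
  qed
qed

lemma bipolar:
  fixes K :: "'a::euclidean_space set"
  assumes "closed K" "convex K" "0 \<in> K" and v: "\<forall>q\<in>polar K. inner v q \<le> 1"
  shows "v \<in> K"
proof (rule ccontr)
  assume "v \<notin> K"
  then obtain a b where ab: "inner a v < b" "\<forall>x\<in>K. b < inner a x"
    using separating_hyperplane_closed_point[OF assms(2,1)] by blast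
  have b: "b < 0" using ab(2) assms(3) by force
  define q where "q = (1/b) *\<^sub>R a"
  have "\<forall>x\<in>K. inner x q \<le> 1"
  proof
    fix x assume "x \<in> K"
    then have "b < inner a x" using ab by auto
    then have "inner a x / b < 1" using b by (simp add: field_simps)
    then show "inner x q \<le> 1" unfolding q_def by (simp add: inner_commute)
  qed
  then have "q \<in> polar K" unfolding polar_def by auto
  moreover have "inner v q > 1"
    using ab(1) b unfolding q_def by (simp add: field_simps inner_commute)
  ultimately show False using v by force
qed


lemma polar_inter_decomp:
  fixes K :: "'a::euclidean_space set"
  assumes cK: "compact K" and cvK: "convex K" and e: "0 < e" and sub: "ball 0 e \<subseteq> K"
    and R: "0 < R" and u: "u \<in> polar (K \<inter> cball 0 R)"
  shows "\<exists>k\<in>polar K. \<exists>d\<in>cball 0 1. u = k + (1/R) *\<^sub>R d"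
proof -
  define S where "S = {x + y | x y. x \<in> polar K \<and> y \<in> cball (0::'a) (1/R)}"
  have "compact (polar K)"
    using polar_bounded[OF e sub] polar_closed bounded_cball bounded_subset
    by (metis compact_eq_bounded_closed)
  then have cS: "compact S" unfolding S_def by (intro compact_sums) auto
  have "S = (\<Union>x\<in> polar K. \<Union>y \<in> cball (0::'a) (1/R). {x + y})" unfolding S_def by blast
  then have cvS: "convex S" by (simp add: convex_sums convex_cball polar_convex)
  have "u \<in> S"
  proof (rule ccontr)
    assume "u \<notin> S"
    then obtain a b where ab: "inner a u < b" "\<forall>x\<in>S. b < inner a x"
      using separating_hyperplane_closed_point[OF cvS compact_imp_closed[OF cS]] by blast
    have "(0::'a) \<in> S" unfolding S_def using zero_in_polar R by force
    then have b: "b < 0" using ab(2) by force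
    define v where "v = (1/b) *\<^sub>R a"
    have vS: "inner v x < 1" if "x \<in> S" for x
    proof -
      have "b < inner a x" using ab that by auto
      then have "inner a x / b < 1" using b by (simp add: field_simps)
      then show ?thesis unfolding v_def by simp
    qed
    have vu: "inner v u > 1"
      using ab(1) b unfolding v_def by (simp add: field_simps)
    have "v \<in> K"
    proof (rule bipolar[OF compact_imp_closed[OF cK] cvK])
      show "0 \<in> K" using sub e by auto
      show "\<forall>q\<in>polar K. inner v q \<le> 1"
      proof
        fix q assume "q \<in> polar K"
        then have "q + 0 \<in> S" unfolding S_def using R by force
        then show "inner v q \<le> 1" using vS by (simp add: less_imp_le)
      qed
    qed
    moreover have "norm v \<le> R"
    proof (cases "v = 0")
      case True then show ?thesis using R by simp
    next
      case False
      define d where "d = ((1/R)/norm v) *\<^sub>R v"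
      have "norm d = 1/R" using False R unfolding d_def by simp
      then have "0 + d \<in> S" unfolding S_def using zero_in_polar by force
      then have "inner v d < 1" using vS by simp
      moreover have "inner v d = norm v / R"
        using False unfolding d_def by (simp add: power2_norm_eq_inner[symmetric] power2_eq_square)
      ultimately show ?thesis using R by (simp add: field_simps)
    qed
    ultimately have "v \<in> K \<inter> cball 0 R" by simp
    then have "inner v u \<le> 1" using u unfolding polar_def by auto
    then show False using vu by simp
  qed
  then obtain k y where ky: "u = k + y" "k \<in> polar K" "y \<in> cball 0 (1/R)"
    unfolding S_def by auto
  have "R *\<^sub>R y \<in> cball 0 1" using ky(3) R by (simp add: field_simps)
  moreover have "u = k + (1/R) *\<^sub>R (R *\<^sub>R y)" using ky R by simp
  ultimately show ?thesis using ky(2) by blast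
qed

lemma zero_ball_in:
  fixes K :: "'a::euclidean_space set"
  assumes "convex_body K" "origin_symmetric K"
  shows "\<exists>e>0. ball 0 e \<subseteq> K"
proof -
  have cv: "convex K" using assms unfolding convex_body_def by auto
  obtain x where "x \<in> interior K" using assms unfolding convex_body_def by auto
  then obtain e where e: "0 < e" "ball x e \<subseteq> K" using mem_interior by blast
  have "ball 0 e \<subseteq> K"
  proof
    fix z assume z: "z \<in> ball (0::'a) e"
    have "x + z \<in> K" using e z by (auto simp: dist_norm)
    moreover have "x - z \<in> K" using e z by (auto simp: dist_norm)
    then have "z - x \<in> K" using assms(2) unfolding origin_symmetric_def by force
    ultimately have "(1/2) *\<^sub>R (x + z) + (1/2) *\<^sub>R (z - x) \<in> K"
      using cv unfolding convex_def by (metis add_divide_distrib field_sum_of_halves less_eq_real_def zero_less_divide_1_iff zero_less_numeral)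
    moreover have "(1/2) *\<^sub>R (x + z) + (1/2) *\<^sub>R (z - x) = z"
      by (simp add: algebra_simps flip: scaleR_add_left)
    ultimately show "z \<in> K" by simp
  qed
  then show ?thesis using e by blast
qed


lemma step1:
  fixes K :: "'a::euclidean_space set"
  assumes cK: "compact K" and cvK: "convex K" and e: "0 < e" and sub: "ball 0 e \<subseteq> K"
    and r: "0 < r" and R: "0 < R"
  shows "covering_number (cball 0 1) (sdilate r (polar K))
     \<le> covering_number (cball 0 1) (sdilate R (polar K)) *
       covering_number (cball 0 1) (sdilate (r/2) (polar (K \<inter> sdilate R (cball 0 1))))"
proof (rule covering_mult[where f = "\<lambda>y x. x + (r/(2*R)) *\<^sub>R y"])
  show "cball (0::'a) 1 \<noteq> {}" by simp
  fix X Y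
  assume X: "cball 0 1 \<subseteq> (\<Union>x\<in>X. (+) x ` sdilate R (polar K))"
    and Y: "cball 0 1 \<subseteq> (\<Union>y\<in>Y. (+) y ` sdilate (r/2) (polar (K \<inter> sdilate R (cball 0 1))))"
  show "cball 0 1 \<subseteq> (\<Union>z\<in>(\<lambda>(y, x). x + (r/(2*R)) *\<^sub>R y) ` (X \<times> Y). (+) z ` sdilate r (polar K))"
  proof
    fix u :: 'a assume u: "u \<in> cball 0 1"
    have Y': "cball 0 1 \<subseteq> (\<Union>y\<in>Y. (+) y ` sdilate (r/2) (polar (K \<inter> cball 0 R)))"
      using Y by (simp only: sdilate_cball[OF R])
    obtain x l where xl: "x \<in> Y" "l \<in> polar (K \<inter> cball 0 R)" "u = x + (r/2) *\<^sub>R l"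
      using subsetD[OF Y' u] by (auto simp: mem_sdilate)
    obtain k d where kd: "k \<in> polar K" "d \<in> cball 0 1" "l = k + (1/R) *\<^sub>R d"
      using polar_inter_decomp[OF cK cvK e sub R xl(2)] by blast
    obtain y k' where yk: "y \<in> X" "k' \<in> polar K" "d = y + R *\<^sub>R k'"
      using subsetD[OF X kd(2)] by (auto simp: mem_sdilate)
    have kk: "(1/2) *\<^sub>R k + (1/2) *\<^sub>R k' \<in> polar K"
      using polar_convex kd(1) yk(2) unfolding convex_def by (metis field_sum_of_halves half_gt_zero_iff less_eq_real_def zero_less_one)
    have "u = (x + (r/(2*R)) *\<^sub>R y) + r *\<^sub>R ((1/2) *\<^sub>R k + (1/2) *\<^sub>R k')"
      using xl(3) kd(3) yk(3) R by (simp add: algebra_simps)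
    then have "u \<in> (+) (x + (r/(2*R)) *\<^sub>R y) ` sdilate r (polar K)"
      using kk by (simp only: mem_shift_sdilate)
    moreover have "x + (r/(2*R)) *\<^sub>R y \<in> (\<lambda>(y, x). x + (r/(2*R)) *\<^sub>R y) ` (X \<times> Y)"
      using xl(1) yk(1) by force
    ultimately show "u \<in> (\<Union>z\<in>(\<lambda>(y, x). x + (r/(2*R)) *\<^sub>R y) ` (X \<times> Y). (+) z ` sdilate r (polar K))"
      by blast
  qed
qed simp


lemma step2:
  fixes K :: "'a::euclidean_space set"
  assumes cK: "compact K" and cvK: "convex K" and sym: "origin_symmetric K" and ne: "K \<noteq> {}"
    and r: "0 < r" and R: "0 < R"
  shows "covering_number K (sdilate r (cball 0 1))
     \<le> covering_number K (sdilate R (cball 0 1)) *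
       covering_number (sdilate 2 K \<inter> sdilate R (cball 0 1)) (sdilate r (cball 0 1))"
proof (rule covering_mult[where f = "\<lambda>x y. closest_point K x + y"])
  show "K \<noteq> {}" by (rule ne)
  obtain k where "k \<in> K" using ne by blast
  then have "-k \<in> K" using sym unfolding origin_symmetric_def by auto
  then have "(1/2) *\<^sub>R k + (1/2) *\<^sub>R (-k) \<in> K"
    using cvK \<open>k \<in> K\<close> unfolding convex_def by (metis field_sum_of_halves half_gt_zero_iff less_eq_real_def zero_less_one)
  then have "0 \<in> K" by simp
  then have "2 *\<^sub>R 0 \<in> sdilate 2 K" unfolding sdilate_def by (intro imageI)
  then show "sdilate 2 K \<inter> sdilate R (cball 0 1) \<noteq> {}" using sdilate_cball[OF R] R by auto
  fix X Y
  assume X: "K \<subseteq> (\<Union>x\<in>X. (+) x ` sdilate R (cball 0 1))"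
    and Y: "sdilate 2 K \<inter> sdilate R (cball 0 1) \<subseteq> (\<Union>y\<in>Y. (+) y ` sdilate r (cball 0 1))"
  show "K \<subseteq> (\<Union>z\<in>(\<lambda>(x, y). closest_point K x + y) ` (X \<times> Y). (+) z ` sdilate r (cball 0 1))"
  proof
    fix u :: 'a assume u: "u \<in> K"
    have X': "K \<subseteq> (\<Union>x\<in>X. (+) x ` cball 0 R)"
      using X by (simp only: sdilate_cball[OF R])
    obtain x where xd: "x \<in> X" "dist x u \<le> R"
      using subsetD[OF X' u] by auto
    define p where "p = closest_point K x"
    have "dist p (closest_point K u) \<le> dist x u"
      unfolding p_def by (rule closest_point_lipschitz[OF cvK compact_imp_closed[OF cK] ne])
    then have "dist p u \<le> R" using closest_point_self[OF u] xd by (simp add: dist_norm)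
    then have "u - p \<in> cball 0 R" by (simp add: dist_norm norm_minus_commute)
    then have "u - p \<in> sdilate R (cball 0 1)" by (simp only: sdilate_cball[OF R])
    moreover have "p \<in> K" unfolding p_def
      by (rule closest_point_in_set[OF compact_imp_closed[OF cK] ne])
    then have "-p \<in> K" using sym unfolding origin_symmetric_def by auto
    then have "(1/2) *\<^sub>R u + (1/2) *\<^sub>R (-p) \<in> K"
      using cvK u unfolding convex_def by (metis field_sum_of_halves half_gt_zero_iff less_eq_real_def zero_less_one)
    then have "2 *\<^sub>R ((1/2) *\<^sub>R u + (1/2) *\<^sub>R (-p)) \<in> sdilate 2 K" unfolding sdilate_def by (intro imageI)
    then have "u - p \<in> sdilate 2 K" by (simp add: algebra_simps)
    ultimately have "u - p \<in> sdilate 2 K \<inter> sdilate R (cball 0 1)" by simp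
    then obtain y w where yw: "y \<in> Y" "w \<in> sdilate r (cball 0 1)" "u - p = y + w"
      using subsetD[OF Y] by blast
    have "u = (p + y) + w" using yw(3) by (simp add: algebra_simps)
    then have "u \<in> (+) (p + y) ` sdilate r (cball 0 1)" using yw(2) by blast
    moreover have "p + y \<in> (\<lambda>(x, y). closest_point K x + y) ` (X \<times> Y)"
      unfolding p_def using xd(1) yw(1) by force
    ultimately show "u \<in> (\<Union>z\<in>(\<lambda>(x, y). closest_point K x + y) ` (X \<times> Y). (+) z ` sdilate r (cball 0 1))"
      by blast
  qed
qed


lemma chain_enat:
  fixes a c :: "nat \<Rightarrow> enat"
  assumes "\<forall>j<s. a j \<le> a (Suc j) * c j"
  shows "a 0 \<le> a s * (\<Prod>j<s. c j)"
  using assms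
proof (induction s)
  case 0 then show ?case by simp
next
  case (Suc m)
  then have IH: "a 0 \<le> a m * (\<Prod>j<m. c j)" by simp
  have "a m \<le> a (Suc m) * c m" using Suc.prems by simp
  then have "a m * (\<Prod>j<m. c j) \<le> a (Suc m) * c m * (\<Prod>j<m. c j)"
    by (rule mult_right_mono) simp
  also have "\<dots> = a (Suc m) * (\<Prod>j<Suc m. c j)" by (simp add: mult_ac)
  finally show ?case using IH by (rule order_trans[rotated])
qed

theorem lemma7:
  fixes K :: "'a::euclidean_space set" and R :: "nat \<Rightarrow> real" and s :: nat
  assumes "convex_body K" and "origin_symmetric K"
    and "0 < R 0" and "\<forall>j<s. R j < R (Suc j)"
  shows "(covering_number (cball 0 1) (sdilate (R 0) (polar K))
           \<le> covering_number (cball 0 1) (sdilate (R s) (polar K))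
             * (\<Prod>j<s. covering_number (cball 0 1)
                   (sdilate (R j / 2) (polar (K \<inter> sdilate (R (Suc j)) (cball 0 1)))))) \<and>
         (covering_number K (sdilate (R 0) (cball 0 1))
           \<le> covering_number K (sdilate (R s) (cball 0 1))
             * (\<Prod>j<s. covering_number (sdilate 2 K \<inter> sdilate (R (Suc j)) (cball 0 1))
                   (sdilate (R j) (cball 0 1))))"
proof -
  have pos: "0 < R j" if "j \<le> s" for j
    using that
  proof (induction j)
    case 0 then show ?case using assms(3) by simp
  next
    case (Suc j)
    then have "0 < R j" by simp
    moreover have "R j < R (Suc j)" using assms(4) Suc.prems by simp
    ultimately show ?case by simp
  qed
  have cK: "compact K" and cvK: "convex K" using assms(1) unfolding convex_body_def by auto
  obtain e where e: "0 < e" "ball 0 e \<subseteq> K" using zero_ball_in[OF assms(1,2)] by blast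
  have ne: "K \<noteq> {}" using e by auto
  show ?thesis
  proof
    show "covering_number (cball 0 1) (sdilate (R 0) (polar K))
           \<le> covering_number (cball 0 1) (sdilate (R s) (polar K))
             * (\<Prod>j<s. covering_number (cball 0 1)
                   (sdilate (R j / 2) (polar (K \<inter> sdilate (R (Suc j)) (cball 0 1)))))"
      by (rule chain_enat[where a = "\<lambda>j. covering_number (cball 0 1) (sdilate (R j) (polar K))"])
         (auto intro!: step1[OF cK cvK e] pos)
    show "covering_number K (sdilate (R 0) (cball 0 1))
           \<le> covering_number K (sdilate (R s) (cball 0 1))
             * (\<Prod>j<s. covering_number (sdilate 2 K \<inter> sdilate (R (Suc j)) (cball 0 1))
                   (sdilate (R j) (cball 0 1)))"
      by (rule chain_enat[where a = "\<lambda>j. covering_number K (sdilate (R j) (cball 0 1))"])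
         (auto intro!: step2[OF cK cvK assms(2) ne] pos)
  qed
qed

end
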